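(* Let $n,m$ be positive integers, not both equal to $1$, with $n\equiv m \pmod 2$. Then \[\sum_{d=0}^{\min(n,m)}(-1)^{d+1}2^{2d-1}\frac{n+m-2d}{n+m-d}\cdot\frac{n+m-2d-1}{n+m-d-1}\binom{n+m-d}{n-d,\,m-d,\,d}\,C\bigl((n+m)/2-d-1\bigr)=\begin{cases}C(n/2-1)\,C(m/2-1)&\text{if } n,m \text{ are even},\\ 0&\text{if } n,m\text{ are odd.}\end{cases}\]
   Context: $C(j)=\frac{1}{j+1}\binom{2j}{j}$ is the $j$-th Catalan number. $\binom{s}{a,\,b,\,c}=\frac{s!}{a!\,b!\,c!}$ is the multinomial coefficient. A summand containing the factor $n+m-2d=0$ (which occurs only for $d=n=m$) is zero, so the undefined value $C(-1)$ never needs to be evaluated. *)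

theory Defs
  imports Complex_Main
begin

definition catalan :: "nat \<Rightarrow> real" where
  "catalan j = real ((2 * j) choose j) / real (j + 1)"

definition multinom3 :: "nat \<Rightarrow> nat \<Rightarrow> nat \<Rightarrow> nat \<Rightarrow> real" where
  "multinom3 s a b c = fact s / (fact a * fact b * fact c)"

end

theory Submission
  imports Defs
begin


definition rf :: "int \<Rightarrow> real" where
  "rf k = (if k < 0 then 0 else 1 / fact (nat k))"

lemma rf_rec: "rf k = of_int (k+1) * rf (k+1)"
proof (cases "k < -1")
  case True then show ?thesis by (simp add: rf_def)
next
  case False
  show ?thesis
  proof (cases "k = -1")
    case True then show ?thesis by (simp add: rf_def)
  next
    case False
    then have k0: "k \<ge> 0" using \<open>\<not> k < -1\<close> by simp
    then have "nat (k+1) = Suc (nat k)" by simp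
    then have "fact (nat (k+1)) = (of_int (k+1)::real) * fact (nat k)"
      using k0 by (simp add: of_nat_nat)
    then show ?thesis using k0 by (simp add: rf_def)
  qed
qed

lemma rf_neg: "k < 0 \<Longrightarrow> rf k = 0" by (simp add: rf_def)
lemma rf_nz: "rf k \<noteq> 0 \<Longrightarrow> 0 \<le> k" by (cases "k < 0") (simp_all add: rf_def)
lemma rf_nat: "rf (int k) = 1 / fact k" by (simp add: rf_def)
lemma rf_pos: "k \<ge> 0 \<Longrightarrow> rf k \<noteq> 0" by (simp add: rf_def)

definition Ab :: "nat \<Rightarrow> nat \<Rightarrow> real" where
  "Ab J e = fact e * real J * fact (2*J) / (fact J)^2"

lemma Ab_e: "Ab J (Suc e) = real (Suc e) * Ab J e"
  by (simp add: Ab_def)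

lemma Ab_0: "Ab 0 e = 0" by (simp add: Ab_def)

lemma Ab_J: "real J * Ab (Suc J) (Suc e) = real (Suc e) * 2 * (2 * real J + 1) * Ab J e"
proof -
  have f1: "fact (2 * Suc J) = (2*real J + 2) * (2 * real J + 1) * (fact (2*J) :: real)"
    by (simp add: algebra_simps)
  have f2: "fact (Suc J) = (real J + 1) * (fact J :: real)" by simp
  have "(fact J :: real) \<noteq> 0" by simp
  have f3: "fact (Suc e) = (real e + 1) * (fact e :: real)" by simp
  have gen: "\<And>a b c x y::real. a \<noteq> 0 \<Longrightarrow> x + 1 \<noteq> 0 \<Longrightarrow>
     x * ((y+1)*b * (x+1) * ((2*x+2)*(2*x+1)*c) / ((x+1)*a)^2)
     = (y+1) * 2 * (2*x+1) * (b * x * c / a^2)"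
  proof -
    fix a b c x y :: real assume a: "a \<noteq> 0" and x: "x + 1 \<noteq> 0"
    have "x * ((y+1)*b * (x+1) * ((2*x+2)*(2*x+1)*c) / ((x+1)*a)^2)
        = ((y+1) * 2 * (2*x+1) * (b * x * c) * ((x+1)*(x+1))) / (a^2 * ((x+1)*(x+1)))"
      by (simp add: power2_eq_square algebra_simps)
    also have "\<dots> = (y+1) * 2 * (2*x+1) * (b * x * c) / a^2"
      by (rule mult_divide_mult_cancel_right) (use x in simp)
    finally show "x * ((y+1)*b * (x+1) * ((2*x+2)*(2*x+1)*c) / ((x+1)*a)^2)
     = (y+1) * 2 * (2*x+1) * (b * x * c / a^2)" by simp
  qed
  have L: "real J * Ab (Suc J) (Suc e) = real J * ((real e+1)*fact e * (real J+1) * ((2*real J+2)*(2*real J+1)*fact(2*J)) / ((real J+1)*fact J)^2)"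
    unfolding Ab_def f1 f2 f3 by (simp add: ac_simps)
  have R: "real (Suc e) * 2 * (2 * real J + 1) * Ab J e = (real e+1) * 2 * (2*real J+1) * (fact e * real J * fact (2*J) / (fact J)^2)"
    by (simp add: Ab_def)
  show ?thesis unfolding L R
    by (rule gen) auto
qed



lemma alg:
  fixes n d K X c R e m Y :: real
  assumes K: "K \<noteq> 0" and e: "e = 2*K+d-2" and m: "m = 2*K+2*d+1-n"
    and Y: "Y = (e+1)*2*(2*K+1)*X/K" and e1: "e+1 \<noteq> 0" and e2: "e+2 \<noteq> 0"
  shows "(n+1)*(c*((e+2)*Y)*(d+1)*R) - 4*(n-2)*(c*X*((n-d)*(n+1-d))*(d+1)*R)
    = (d+1)*(2*(d+1)-2*n-m)/(e+1)*(c*(-4)*((e+1)*X)*((n+1-d)*(m-d))*R)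
      - d*(2*d-2*n-m)/(e+2)*(c*((e+2)*Y)*(d+1)*R)"
proof -
  have "(d+1)*(2*(d+1)-2*n-m)/(e+1)*(c*(-4)*((e+1)*X)*((n+1-d)*(m-d))*R)
      = (d+1)*(2*(d+1)-2*n-m)*(c*(-4)*X*((n+1-d)*(m-d))*R)"
    using e1 by (simp add: field_simps)
  moreover have "d*(2*d-2*n-m)/(e+2)*(c*((e+2)*Y)*(d+1)*R) = d*(2*d-2*n-m)*(c*Y*(d+1)*R)"
    using e2 by (simp add: field_simps)
  moreover have "(n+1)*(c*((e+2)*Y)*(d+1)*R) - 4*(n-2)*(c*X*((n-d)*(n+1-d))*(d+1)*R)
     - ((d+1)*(2*(d+1)-2*n-m)*(c*(-4)*X*((n+1-d)*(m-d))*R) - d*(2*d-2*n-m)*(c*Y*(d+1)*R)) = 0"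
  proof -
    have "K * ((n+1)*(c*((e+2)*Y)*(d+1)*R) - 4*(n-2)*(c*X*((n-d)*(n+1-d))*(d+1)*R)
     - ((d+1)*(2*(d+1)-2*n-m)*(c*(-4)*X*((n+1-d)*(m-d))*R) - d*(2*d-2*n-m)*(c*Y*(d+1)*R))) = 0"
      unfolding Y e m using K by (simp add: field_simps)
    then show ?thesis using K by simp
  qed
  ultimately show ?thesis by simp
qed



definition T :: "nat \<Rightarrow> nat \<Rightarrow> nat \<Rightarrow> real" where
  "T n m d = - ((-4)^d / 2) * Ab ((n+m) div 2 - d) (n+m-d-2)
     * rf (int n - int d) * rf (int m - int d) * rf (int d)"

definition G :: "nat \<Rightarrow> nat \<Rightarrow> nat \<Rightarrow> real" where
  "G n m d = real d * (2*real d - 2*real n - real m) / (real n + real m - 1 - real d) * T (Suc n) m d"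

lemma key:
  assumes n: "n \<ge> 1" and m: "m \<ge> 1" and H: "Suc n + m = 2*H"
  shows "(real n + 1) * T (Suc n) m d - 4 * (real n - 2) * T (n-1) m d = G n m (Suc d) - G n m d"
proof -
  define R where "R = rf (int n + 1 - int d) * rf (int m - int d) * rf (int d + 1)"
  define c where "c = - (((-4::real)^d) / 2)"
  have r1: "rf (int d) = (real d + 1) * rf (int d + 1)" using rf_rec[of "int d"] by simp
  have r2: "rf (int n - int d) = (real n + 1 - real d) * rf (int n + 1 - int d)"
    using rf_rec[of "int n - int d"] by (simp add: algebra_simps)
  have r3: "rf (int m - int (Suc d)) = (real m - real d) * rf (int m - int d)"
    using rf_rec[of "int m - int (Suc d)"] by (simp add: algebra_simps)
  have r4: "rf (int (n-1) - int d) = (real n - real d) * rf (int n - int d)"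
    using rf_rec[of "int (n-1) - int d"] n by (simp add: algebra_simps of_nat_diff)
  have H1: "(Suc n + m) div 2 = H" using H by simp
  have H2: "(n - 1 + m) div 2 = H - 1" using H n by simp
  have eT1: "T (Suc n) m d = c * Ab (H - d) (Suc n + m - d - 2) * (real d + 1) * R"
    unfolding T_def H1 R_def c_def r1 by (simp add: algebra_simps)
  have eT2: "T (Suc n) m (Suc d) = c * (-4) * Ab (H - Suc d) (Suc n + m - Suc d - 2) * ((real n + 1 - real d) * (real m - real d)) * R"
  proof -
    have q1: "rf (int (Suc n) - int (Suc d)) = (real n + 1 - real d) * rf (int n + 1 - int d)"
      using r2 by simp
    have q2: "rf (int (Suc d)) = rf (int d + 1)" by (simp add: add.commute)
    show ?thesis unfolding T_def H1 R_def c_def q1 q2 r3 by (simp add: algebra_simps)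
  qed
  have eT3: "T (n-1) m d = c * Ab (H - 1 - d) (n - 1 + m - d - 2) * ((real n - real d) * (real n + 1 - real d)) * (real d + 1) * R"
    unfolding T_def H2 R_def c_def r1 r4 r2 by (simp add: mult_ac)
  show ?thesis
  proof (cases "R = 0")
    case True
    then show ?thesis unfolding G_def eT1 eT2 eT3 by simp
  next
    case False
    then have "rf (int n + 1 - int d) \<noteq> 0" "rf (int m - int d) \<noteq> 0" unfolding R_def by auto
    then have dn: "d \<le> n + 1" and dm: "d \<le> m" by (auto dest!: rf_nz)
    then have dH: "d \<le> H" using H by linarith
    consider "H - d = 0" | "H - d = 1" | "H - d \<ge> 2" by linarith
    then show ?thesis
    proof cases
      case 1
      then have "d = H" using dH by simp
      then have "d = m" "d = n + 1" using H dn dm by linarith+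
      then show ?thesis unfolding G_def eT1 eT2 eT3 using 1 by (simp add: Ab_0)
    next
      case 2
      have a2: "H - Suc d = 0" "H - 1 - d = 0" using 2 by auto
      have d1: "d \<ge> 1" using 2 H n m dH by linarith
      have dd: "real n + real m - 1 - real d = real d" using 2 H dH by linarith
      have dd2: "2 * real d - 2 * real n - real m = - (real n + 1)" using 2 H dH by linarith
      have "real d \<noteq> 0" using d1 by simp
      then show ?thesis unfolding G_def eT2 eT3 a2 Ab_0 dd dd2 by (simp add: field_simps)
    next
      case 3
      define K where "K = H - d - 1"
      have K1: "K \<ge> 1" using 3 K_def by simp
      define e where "e = 2*K + d - 2"
      have i1: "H - d = Suc K" "H - Suc d = K" "H - 1 - d = K" using 3 K_def by auto
      have i2: "Suc n + m - d - 2 = Suc (Suc e)" "Suc n + m - Suc d - 2 = Suc e" "n - 1 + m - d - 2 = e"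
        using H K1 K_def e_def dH 3 n by auto
      define X where "X = Ab K e"
      have A1: "Ab K (Suc e) = (real e + 1) * X" unfolding X_def by (simp add: Ab_e)
      have A2: "Ab (Suc K) (Suc (Suc e)) = (real e + 2) * ((real e+1)*2*(2*real K+1)*X/real K)"
      proof -
        have "real K * Ab (Suc K) (Suc e) = real (Suc e) * 2 * (2 * real K + 1) * X"
          unfolding X_def by (rule Ab_J)
        then have "Ab (Suc K) (Suc e) = (real e+1)*2*(2*real K+1)*X/real K"
          using K1 by (simp add: field_simps)
        then show ?thesis by (simp add: Ab_e)
      qed
      have re: "real e = 2 * real K + real d - 2" using K1 e_def by simp
      have rm: "real m = 2 * real K + 2 * real d + 1 - real n" using H K_def 3 dH by simp
      have den1: "real n + real m - 1 - real (Suc d) = real e + 1" using re rm by simp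
      have den2: "real n + real m - 1 - real d = real e + 2" using re rm by simp
      have "(real n+1)*(c*((real e+2)*((real e+1)*2*(2*real K+1)*X/real K))*(real d+1)*R)
          - 4*(real n-2)*(c*X*((real n-real d)*(real n+1-real d))*(real d+1)*R)
        = (real d+1)*(2*(real d+1)-2*real n-real m)/(real e+1)*(c*(-4)*((real e+1)*X)*((real n+1-real d)*(real m-real d))*R)
          - real d*(2*real d-2*real n-real m)/(real e+2)*(c*((real e+2)*((real e+1)*2*(2*real K+1)*X/real K))*(real d+1)*R)"
        by (rule alg[OF _ re rm refl]) (use K1 in auto)
      moreover have "T (Suc n) m d = c*((real e+2)*((real e+1)*2*(2*real K+1)*X/real K))*(real d+1)*R"
        unfolding eT1 i1 i2 A2 by simp
      moreover have "T (n-1) m d = c*X*((real n-real d)*(real n+1-real d))*(real d+1)*R"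
        unfolding eT3 i1 i2 X_def by simp
      moreover have "G n m (Suc d) = (real d+1)*(2*(real d+1)-2*real n-real m)/(real e+1)*(c*(-4)*((real e+1)*X)*((real n+1-real d)*(real m-real d))*R)"
        unfolding G_def den1 eT2 i1 i2 A1 by (simp add: algebra_simps)
      moreover have "G n m d = real d*(2*real d-2*real n-real m)/(real e+2)*(c*((real e+2)*((real e+1)*2*(2*real K+1)*X/real K))*(real d+1)*R)"
        unfolding G_def den2 eT1 i1 i2 A2 by simp
      ultimately show ?thesis by simp
    qed
  qed
qed



definition S :: "nat \<Rightarrow> nat \<Rightarrow> real" where
  "S n m = (\<Sum>d = 0..min n m. T n m d)"

lemma T_zero: "n < d \<or> m < d \<Longrightarrow> T n m d = 0"
  unfolding T_def by (auto simp: rf_neg)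

lemma S_less: assumes "min n m < B" shows "(\<Sum>d<B. T n m d) = S n m"
proof -
  have "(\<Sum>d<B. T n m d) = (\<Sum>d = 0..min n m. T n m d)"
    by (rule sum.mono_neutral_right) (use assms T_zero in auto)
  then show ?thesis unfolding S_def .
qed

lemma T_sym: "T n m d = T m n d"
  unfolding T_def by (simp add: add.commute mult_ac)

lemma S_sym: "S n m = S m n"
  unfolding S_def by (simp add: T_sym min.commute)

lemma recur:
  assumes n: "n \<ge> 1" and m: "m \<ge> 1" and H: "Suc n + m = 2*H"
  shows "(real n + 1) * S (Suc n) m = 4 * (real n - 2) * S (n-1) m"
proof -
  define B where "B = n + m + 2"
  have "(\<Sum>d<B. (real n + 1) * T (Suc n) m d - 4 * (real n - 2) * T (n-1) m d)
      = (\<Sum>d<B. G n m (Suc d) - G n m d)"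
    using key[OF n m H] by simp
  also have "\<dots> = G n m B - G n m 0" by (rule sum_lessThan_telescope)
  also have "\<dots> = 0" unfolding G_def B_def using T_zero by simp
  finally have "(real n + 1) * (\<Sum>d<B. T (Suc n) m d) - 4 * (real n - 2) * (\<Sum>d<B. T (n-1) m d) = 0"
    by (simp add: sum_subtractf sum_distrib_left)
  moreover have "(\<Sum>d<B. T (Suc n) m d) = S (Suc n) m" by (rule S_less) (simp add: B_def)
  moreover have "(\<Sum>d<B. T (n-1) m d) = S (n-1) m" by (rule S_less) (simp add: B_def)
  ultimately show ?thesis by simp
qed

lemma catalan_fact: "catalan k = fact (2*k) / (fact k * fact (Suc k))"
proof -
  have "real ((2*k) choose k) = fact (2*k) / (fact k * fact k)"
    using binomial_fact[of k "2*k", where 'a=real] by (simp add: mult_2)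
  moreover have "fact (Suc k) = (real k + 1) * (fact k :: real)" by simp
  ultimately show ?thesis unfolding catalan_def by (simp add: divide_divide_eq_left mult_ac)
qed

lemma catalan_rec: "(real k + 2) * catalan (Suc k) = 2 * (2 * real k + 1) * catalan k"
proof -
  have f1: "fact (2 * Suc k) = (2*real k + 2) * (2 * real k + 1) * (fact (2*k) :: real)"
    by (simp add: algebra_simps)
  have f2: "fact (Suc (Suc k)) = (real k + 2) * (fact (Suc k) :: real)" by simp
  have f3: "fact (Suc k) = (real k + 1) * (fact k :: real)" by simp
  have nz: "(fact k :: real) \<noteq> 0" "real k + 1 \<noteq> 0" "real k + 2 \<noteq> 0" by simp_all
  show ?thesis unfolding catalan_fact f1 f2
    unfolding f3 using nz by (simp add: divide_simps) (simp add: algebra_simps)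
qed

lemma S0: assumes "m = 2 * Suc j" shows "S 0 m = - catalan j / 2"
proof -
  have "S 0 m = T 0 m 0" unfolding S_def by simp
  also have "\<dots> = - (1/2) * Ab (Suc j) (2*j) * rf (int m)"
    unfolding T_def using assms by (simp add: rf_def del: of_nat_mult)
  also have "\<dots> = - catalan j / 2"
  proof -
    have r: "rf (int m) = 1 / fact (2 * Suc j)" using assms by (simp only: rf_nat)
    have f3: "fact (Suc j) = (real j + 1) * (fact j :: real)" by simp
    have nz: "(fact j :: real) \<noteq> 0" "(fact (2*Suc j) :: real) \<noteq> 0" by simp_all
    show ?thesis unfolding r Ab_def catalan_fact f3 using nz
      by (simp add: divide_simps power2_eq_square)
  qed
  finally show ?thesis .
qed

lemma S1: assumes "m = 2 * j + 3" shows "S 1 m = 0"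
proof -
  have "S 1 m = T 1 m 0 + T 1 m 1" unfolding S_def using assms by (simp add: atLeast0_atMost_Suc)
  also have "T 1 m 0 = - (1/2) * Ab (Suc (Suc j)) (Suc (Suc (2*j))) / fact (2*j+3)"
  proof -
    have "rf (int m - int 0) = 1 / fact (2*j+3)" using assms rf_nat[of m] by simp
    moreover have "(1 + m) div 2 - 0 = Suc (Suc j)" "1 + m - 0 - 2 = Suc (Suc (2*j))" using assms by auto
    ultimately show ?thesis unfolding T_def by (simp add: rf_def)
  qed
  also have "T 1 m 1 = 2 * Ab (Suc j) (Suc (2*j)) / fact (2*j+2)"
  proof -
    have "rf (int m - int 1) = 1 / fact (2*j+2)" using assms rf_nat[of "2*j+2"] by simp
    moreover have "(1 + m) div 2 - 1 = Suc j" "1 + m - 1 - 2 = Suc (2*j)" using assms by auto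
    ultimately show ?thesis unfolding T_def by (simp add: rf_def)
  qed
  also have "- (1/2) * Ab (Suc (Suc j)) (Suc (Suc (2*j))) / fact (2*j+3) + 2 * Ab (Suc j) (Suc (2*j)) / fact (2*j+2) = 0"
  proof -
    have f1: "fact (2*j+3) = (2*real j+3) * (fact (2*j+2) :: real)"
      by (simp add: numeral_3_eq_3 algebra_simps)
    have f2: "fact (2*Suc (Suc j)) = (2*real j+4) * (2*real j+3) * (fact (2*j+2) :: real)"
      by (simp add: numeral_3_eq_3 algebra_simps)
    have f5: "fact (2 * Suc j) = (fact (2*j+2) :: real)" by simp
    have f3: "fact (Suc (Suc j)) = (real j + 2) * (fact (Suc j) :: real)" by simp
    have f4: "fact (Suc (Suc (2*j))) = (2*real j+2) * (fact (Suc (2*j)) :: real)" by simp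
    have nz: "(fact (Suc j) :: real) \<noteq> 0" "(fact (2*j+2) :: real) \<noteq> 0" by simp_all
    show ?thesis unfolding Ab_def f1 f2 f3 f4 f5 using nz
      by (simp add: divide_simps power2_eq_square) (simp add: algebra_simps)
  qed
  finally show ?thesis .
qed



definition cc :: "nat \<Rightarrow> real" where
  "cc k = (if even k \<and> k \<ge> 2 then catalan (k div 2 - 1) else 0)"

lemma cc_rec: assumes "n \<ge> 3" shows "real n * cc n = 4 * (real n - 3) * cc (n-2)"
proof (cases "even n")
  case False
  then show ?thesis unfolding cc_def by auto
next
  case True
  then obtain b where b: "n = 2*b" by (rule evenE)
  then have "b \<ge> 2" using assms by simp
  then have k: "n = 2*(b-2) + 4" using b by simp
  define k where "k = b - 2"
  note k = k[folded k_def]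
  have c1: "cc n = catalan (Suc k)" unfolding cc_def using k by simp
  have c2: "cc (n-2) = catalan k" unfolding cc_def using k by simp
  show ?thesis unfolding c1 c2 using catalan_rec[of k] k by (simp add: algebra_simps)
qed

lemma main:
  assumes m: "m \<ge> 2"
  shows "n \<ge> 1 \<Longrightarrow> even (n+m) \<Longrightarrow> S n m = cc n * cc m"
proof (induction n rule: less_induct)
  case (less n)
  consider "n = 1" | "n = 2" | "n \<ge> 3" using less.prems by linarith
  then show ?case
  proof cases
    case 1
    then have "odd m" using less.prems by simp
    then obtain b where b: "m = 2*b+1" by (rule oddE)
    then have "b \<ge> 1" using m by simp
    then have "m = 2*(b-1)+3" using b by simp
    then show ?thesis using S1 1 by (simp add: cc_def)
  next
    case 2
    then have "even m" using less.prems by simp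
    then obtain b where b: "m = 2*b" by (rule evenE)
    then have "b \<ge> 1" using m by simp
    then have j: "m = 2 * Suc (b-1)" using b by simp
    define j where "j = b - 1"
    note j = j[folded j_def]
    have "(real 1 + 1) * S (Suc 1) m = 4 * (real 1 - 2) * S (1-1) m"
      by (rule recur[where H="Suc (Suc j)"]) (use j in auto)
    then have "S 2 m = catalan j" using S0[OF j] by (simp add: numeral_2_eq_2)
    moreover have "cc 2 = 1" unfolding cc_def catalan_def by simp
    moreover have "cc m = catalan j" unfolding cc_def using j by simp
    ultimately show ?thesis using 2 by simp
  next
    case 3
    have IH: "S (n-2) m = cc (n-2) * cc m"
      using less.IH[of "n-2"] 3 less.prems by auto
    obtain H where H0: "n + m = 2*H" using less.prems(2) by (rule evenE)
    have H: "Suc (n-1) + m = 2*H" using H0 3 by simp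
    have "(real (n-1) + 1) * S (Suc (n-1)) m = 4 * (real (n-1) - 2) * S (n-1-1) m"
      by (rule recur[OF _ _ H]) (use 3 m in auto)
    moreover have "Suc (n-1) = n" "n-1-1 = n-2" "real (n-1) = real n - 1" using 3 by auto
    ultimately have "real n * S n m = 4 * (real n - 3) * S (n-2) m" by simp
    also have "\<dots> = (4 * (real n - 3) * cc (n-2)) * cc m" unfolding IH by simp
    also have "\<dots> = real n * cc n * cc m" using cc_rec[OF 3] by simp
    finally show ?thesis using 3 by simp
  qed
qed



lemma powi_eq: "(2::real) powi (2 * int d - 1) = 4^d / 2"
proof -
  have "(2::real) powi (2 * int d - 1) * 2 = 2 powi (2 * int d)"
    by (rule power_int_minus_mult) simp
  also have "(2::real) powi (2 * int d) = 4^d"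
    using power_int_of_nat[of "2::real" "2*d"] by (simp add: power_mult)
  finally show ?thesis by (simp add: field_simps)
qed

lemma alg2:
  fixes s x y A B k F1 F2 F3 :: real
  assumes "x \<ge> 0" "y \<ge> 0" "k \<noteq> 0" "F1 \<noteq> 0" "F2 \<noteq> 0" "F3 \<noteq> 0"
  shows "s * ((2*x+2)/(2*x+2+y)) * ((2*x+1)/(2*x+1+y)) * ((2*x+y+2)*(2*x+y+1)*A/(F1*F2*F3)) * (B/(k*((x+1)*k)))
    = s * (A*(x+1)*((2*x+2)*(2*x+1)*B)/((x+1)*k)^2) * (1/F1)*(1/F2)*(1/F3)"
  using assms by (simp add: divide_simps power2_eq_square) (simp add: algebra_simps)

lemma summand_eq:
  assumes ev: "even (n+m)" and dn: "d \<le> n" and dm: "d \<le> m"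
  shows "(-1) ^ (d + 1) * (2::real) powi (2 * int d - 1)
            * ((real n + real m - 2 * real d) / (real n + real m - real d))
            * ((real n + real m - 2 * real d - 1) / (real n + real m - real d - 1))
            * multinom3 (n + m - d) (n - d) (m - d) d
            * catalan (nat (int ((n + m) div 2) - int d - 1)) = T n m d"
proof -
  obtain H where H: "n + m = 2*H" using ev by (rule evenE)
  have dH: "d \<le> H" using H dn dm by simp
  have r1: "rf (int n - int d) = 1 / fact (n-d)" using rf_nat[of "n-d"] dn by (simp add: of_nat_diff)
  have r2: "rf (int m - int d) = 1 / fact (m-d)" using rf_nat[of "m-d"] dm by (simp add: of_nat_diff)
  have r3: "rf (int d) = 1 / fact d" by (rule rf_nat)
  have sg: "(-1::real) ^ (d + 1) * (4^d / 2) = - ((-4)^d / 2)"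
  proof -
    have "(-4::real)^d = (-1)^d * 4^d" by (metis mult_minus1 power_mult_distrib)
    then show ?thesis by simp
  qed
  show ?thesis
  proof (cases "H = d")
    case True
    then have "real n + real m - 2 * real d = 0" using H by simp
    moreover have "(n+m) div 2 - d = 0" using H True by simp
    ultimately show ?thesis unfolding T_def by (simp add: Ab_0)
  next
    case False
    define K where "K = H - d - 1"
    have i1: "(n+m) div 2 - d = Suc K" "n + m - d - 2 = 2*K + d" "n + m - d = Suc (Suc (2*K+d))"
      "nat (int ((n + m) div 2) - int d - 1) = K"
      using H False dH K_def by auto
    have re1: "real n + real m - 2 * real d = 2 * real K + 2"
      and re2: "real n + real m - real d = 2 * real K + 2 + real d"
      using H False dH K_def by auto
    have re3: "real n + real m - 2 * real d - 1 = 2 * real K + 1"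
      and re4: "real n + real m - real d - 1 = 2 * real K + 1 + real d" using re1 re2 by auto
    have m3: "multinom3 (n + m - d) (n - d) (m - d) d = (2*real K+real d+2)*(2*real K+real d+1)*fact (2*K+d) / (fact (n-d) * fact (m-d) * fact d)"
      unfolding multinom3_def i1 by (simp add: algebra_simps)
    have cK: "catalan K = fact (2*K) / (fact K * ((real K + 1) * fact K))"
      unfolding catalan_fact by simp
    have AbK: "Ab (Suc K) (2*K+d) = fact (2*K+d) * (real K+1) * ((2*real K+2)*(2*real K+1)*fact (2*K)) / ((real K + 1) * fact K)^2"
    proof -
      have "fact (2 * Suc K) = (2*real K + 2) * (2 * real K + 1) * (fact (2*K) :: real)"
        by (simp add: algebra_simps)
      then show ?thesis unfolding Ab_def by (simp add: algebra_simps)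
    qed
    have "T n m d = - ((-4)^d / 2) * (fact (2*K+d) * (real K+1) * ((2*real K+2)*(2*real K+1)*fact (2*K)) / ((real K + 1) * fact K)^2)
        * (1 / fact (n-d)) * (1 / fact (m-d)) * (1 / fact d)"
      unfolding T_def i1 r1 r2 r3 using AbK by simp
    also have "\<dots> = - ((-4)^d / 2) * ((2*real K+2)/(2*real K+2+real d)) * ((2*real K+1)/(2*real K+1+real d))
        * ((2*real K+real d+2)*(2*real K+real d+1)*fact (2*K+d) / (fact (n-d) * fact (m-d) * fact d))
        * (fact (2*K) / (fact K * ((real K + 1) * fact K)))"
      by (rule alg2[symmetric]) auto
    finally show ?thesis unfolding powi_eq re1 re2 re3 re4 m3 i1(4) cK
      using sg by (simp add: ac_simps)
  qed
qed


theorem corollary4p2: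
  fixes n m :: nat
  assumes "n \<ge> 1" and "m \<ge> 1" and "\<not> (n = 1 \<and> m = 1)"
    and "n mod 2 = m mod 2"
  shows "(\<Sum>d = 0..min n m.
            (-1) ^ (d + 1) * (2::real) powi (2 * int d - 1)
            * ((real n + real m - 2 * real d) / (real n + real m - real d))
            * ((real n + real m - 2 * real d - 1) / (real n + real m - real d - 1))
            * multinom3 (n + m - d) (n - d) (m - d) d
            * catalan (nat (int ((n + m) div 2) - int d - 1)))
         = (if even n \<and> even m then catalan (n div 2 - 1) * catalan (m div 2 - 1) else 0)"
proof -
  have ev: "even (n+m)" using assms(4) by presburger
  have par: "even n \<longleftrightarrow> even m" using assms(4) by (simp add: even_iff_mod_2_eq_zero)
  have "(\<Sum>d = 0..min n m.
            (-1) ^ (d + 1) * (2::real) powi (2 * int d - 1)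
            * ((real n + real m - 2 * real d) / (real n + real m - real d))
            * ((real n + real m - 2 * real d - 1) / (real n + real m - real d - 1))
            * multinom3 (n + m - d) (n - d) (m - d) d
            * catalan (nat (int ((n + m) div 2) - int d - 1))) = S n m"
    unfolding S_def
  proof (rule sum.cong[OF refl])
    fix d assume d: "d \<in> {0..min n m}"
    show "(-1) ^ (d + 1) * (2::real) powi (2 * int d - 1)
            * ((real n + real m - 2 * real d) / (real n + real m - real d))
            * ((real n + real m - 2 * real d - 1) / (real n + real m - real d - 1))
            * multinom3 (n + m - d) (n - d) (m - d) d
            * catalan (nat (int ((n + m) div 2) - int d - 1)) = T n m d"
      by (rule summand_eq[OF ev]) (use d in auto)
  qed
  also have "S n m = (if even n \<and> even m then catalan (n div 2 - 1) * catalan (m div 2 - 1) else 0)"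
  proof (cases "m \<ge> 2")
    case True
    have "S n m = cc n * cc m" by (rule main[OF True assms(1) ev])
    moreover have "even n \<Longrightarrow> n \<ge> 2" "even m \<Longrightarrow> m \<ge> 2" using assms(1,2) by (auto elim!: evenE)
    ultimately show ?thesis unfolding cc_def using par by auto
  next
    case False
    then have m1: "m = 1" using assms(2) by simp
    then have "odd n" using par by simp
    then have n2: "n \<ge> 2" using assms(1,3) m1 by (cases "n = 1") auto
    have "S n m = S 1 n" using m1 S_sym by simp
    also have "\<dots> = cc 1 * cc n" by (rule main[OF n2]) (use ev m1 in auto)
    finally show ?thesis using m1 by (simp add: cc_def)
  qed
  finally show ?thesis .
qed

end
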